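(* Assume $\operatorname{non}(\mathcal N)=\mathfrak c$. Then $\mathcal{NM}_{\mathfrak c}$, $\mathcal{NF}_{\mathfrak c}$ and $\mathcal{ND}_{\mathfrak c}$ are positively $2^{\mathfrak c}$-coneable in $\left(\mathbb R^{[0,1]}\right)^{\mathfrak c}$.
   Context: For a regular infinite cardinal $\kappa$ (viewed as the directed set of ordinals $<\kappa$ with the usual order), a $\kappa$-sequence $(x_\alpha)_{\alpha<\kappa}$ in a topological space converges to $x$ if for every neighbourhood $U$ of $x$ there is $\alpha_0<\kappa$ with $x_\alpha\in U$ for all $\alpha_0<\alpha<\kappa$; $\left(\mathbb R^{[0,1]}\right)^{\kappa}$ is the real vector space/algebra of $\kappa$-sequences of functions $[0,1]\to\mathbb R$ with indexwise operations. $\lambda$ is Lebesgue measure, $\mathcal N$ the null subsets of $[0,1]$, $\operatorname{non}(\mathcal N)$ the least cardinality of a non-null subset of $[0,1]$, $\mathfrak c=2^{\aleph_0}$. For bounded $\kappa$-sequences of reals, $\liminf$ is the infimum of the set of cluster points. $\mathcal{NM}_{\kappa}$: $\kappa$-sequences of Lebesgue measurable $f_\alpha:[0,1]\to\mathbb R$ with $0\le f_\alpha\le f_\beta$ a.e. whenever $\alpha\le\beta$, converging pointwise a.e. to an integrable $f$, and with $\int f_\alpha\,d\lambda$ not converging to $\int f\,d\lambda$. $\mathcal{NF}_{\kappa}$: $\kappa$-sequences of Lebesgue measurable $f_\alpha\ge0$ a.e. on $[0,1]$ with $x\mapsto\liminf_\alpha f_\alpha(x)$ integrable and $\int\liminf_\alpha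 f_\alpha\,d\lambda>\liminf_\alpha\int f_\alpha\,d\lambda$. $\mathcal{ND}_{\kappa}$: $\kappa$-sequences of Lebesgue measurable $f_\alpha:[0,1]\to\mathbb R$ with some integrable $g$ such that $|f_\alpha|\le g$ a.e. for all $\alpha$, $f_\alpha\to f$ a.e. for some integrable $f$, and $\int|f_\alpha-f|\,d\lambda\not\to0$. $S$ is positively $\mu$-coneable if there is a linearly independent $B\subset S$ with $\operatorname{card}(B)=\mu$ such that every combination $\sum a_ix_i$, $a_i>0$, $x_i\in B$ (finite) lies in $S$. *)

theory Defs
  imports "HOL-Analysis.Analysis" "HOL-Library.Function_Algebras"
begin

text \<open>Index set: the ordinals below the continuum, represented as the carrier UNIV::real
  well-ordered by the initial-ordinal well-order card_of UNIV (order type = initial ordinal of c).\<close>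

definition cidx :: "real rel" where
  "cidx = card_of (UNIV :: real set)"

definition cless :: "real \<Rightarrow> real \<Rightarrow> bool" where
  "cless a b \<longleftrightarrow> (a, b) \<in> cidx \<and> a \<noteq> b"

definition kconv :: "(real \<Rightarrow> 'b::topological_space) \<Rightarrow> 'b \<Rightarrow> bool" where
  "kconv x l \<longleftrightarrow> (\<forall>U. open U \<and> l \<in> U \<longrightarrow> (\<exists>a0. \<forall>a. cless a0 a \<longrightarrow> x a \<in> U))"

definition kcluster :: "(real \<Rightarrow> 'b::topological_space) \<Rightarrow> 'b \<Rightarrow> bool" where
  "kcluster x y \<longleftrightarrow> (\<forall>U. open U \<and> y \<in> U \<longrightarrow> (\<forall>a0. \<exists>a. cless a0 a \<and> x a \<in> U))"

definition kliminf :: "(real \<Rightarrow> ereal) \<Rightarrow> ereal" where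
  "kliminf x = Inf {y. kcluster x y}"

abbreviation I01 :: "real measure" where
  "I01 \<equiv> lebesgue_on {0..1}"

text \<open>Elements of (R^[0,1])^c: c-sequences of functions on [0,1], represented as
  real-valued functions on the reals vanishing outside [0,1].\<close>
definition KSeq :: "(real \<Rightarrow> real \<Rightarrow> real) set" where
  "KSeq = {f. \<forall>a x. x \<notin> {0..1} \<longrightarrow> f a x = 0}"

definition kscale :: "real \<Rightarrow> (real \<Rightarrow> real \<Rightarrow> real) \<Rightarrow> (real \<Rightarrow> real \<Rightarrow> real)" where
  "kscale c f = (\<lambda>a x. c * f a x)"

definition NM :: "(real \<Rightarrow> real \<Rightarrow> real) set" where
  "NM = {f \<in> KSeq.
     (\<forall>a. f a \<in> borel_measurable I01) \<and>
     (\<forall>a b. (a, b) \<in> cidx \<longrightarrow> (AE x in I01. 0 \<le> f a x \<and> f a x \<le> f b x)) \<and>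
     (\<exists>F. integrable I01 F \<and> (AE x in I01. kconv (\<lambda>a. f a x) (F x)) \<and>
          \<not> kconv (\<lambda>a. \<integral>\<^sup>+ x. ennreal (f a x) \<partial>I01) (\<integral>\<^sup>+ x. ennreal (F x) \<partial>I01))}"

definition NF :: "(real \<Rightarrow> real \<Rightarrow> real) set" where
  "NF = {f \<in> KSeq.
     (\<forall>a. f a \<in> borel_measurable I01 \<and> (AE x in I01. 0 \<le> f a x)) \<and>
     (let L = (\<lambda>x. kliminf (\<lambda>a. ereal (f a x))) in
        (AE x in I01. \<bar>L x\<bar> \<noteq> \<infinity>) \<and>
        integrable I01 (\<lambda>x. real_of_ereal (L x)) \<and>
        ereal (\<integral>x. real_of_ereal (L x) \<partial>I01) >
          kliminf (\<lambda>a. enn2ereal (\<integral>\<^sup>+ x. ennreal (f a x) \<partial>I01)))}"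

definition ND :: "(real \<Rightarrow> real \<Rightarrow> real) set" where
  "ND = {f \<in> KSeq.
     (\<forall>a. f a \<in> borel_measurable I01) \<and>
     (\<exists>g. integrable I01 g \<and> (\<forall>a. AE x in I01. \<bar>f a x\<bar> \<le> g x)) \<and>
     (\<exists>F. integrable I01 F \<and> (AE x in I01. kconv (\<lambda>a. f a x) (F x)) \<and>
          \<not> kconv (\<lambda>a. \<integral>x. \<bar>f a x - F x\<bar> \<partial>I01) 0)}"

text \<open>Positive mu-coneability, mu given as the cardinality of a set M.\<close>
definition pos_coneable :: "(real \<Rightarrow> real \<Rightarrow> real) set \<Rightarrow> 'm set \<Rightarrow> bool" where
  "pos_coneable S M \<longleftrightarrow> (\<exists>B. B \<subseteq> S \<and> \<not> module.dependent kscale B \<and> (card_of B, card_of M) \<in> ordIso \<and>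
     (\<forall>G c. finite G \<and> G \<noteq> {} \<and> G \<subseteq> B \<and> (\<forall>g\<in>G. c g > (0::real)) \<longrightarrow>
        (\<Sum>g\<in>G. kscale (c g) g) \<in> S))"

definition non_null_eq_c :: bool where
  "non_null_eq_c \<longleftrightarrow> (\<forall>A. A \<subseteq> {0..1::real} \<and> (card_of A, card_of (UNIV :: real set)) \<in> ordLess \<longrightarrow> A \<in> null_sets lebesgue)"

lemma vector_space_kscale: "vector_space kscale"
  by unfold_locales (auto simp: kscale_def fun_eq_iff algebra_simps)

end

theory Submission imports Defs begin
unbundle cardinal_syntax

lemma cidx_props: "Card_order cidx" "Field cidx = UNIV" "Well_order cidx"
  unfolding cidx_def by (rule card_of_Card_order, rule Field_card_of, rule card_of_Well_order)

lemma cless_underS: "{x. cless x a} = underS cidx a"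
  unfolding cless_def underS_def by auto

lemma underS_small: "|underS cidx a| <o |UNIV :: real set|"
proof -
  have "|underS cidx a| <o cidx" by (rule card_of_underS[OF cidx_props(1)]) (simp add: cidx_props(2))
  thus ?thesis unfolding cidx_def .
qed

lemma small_null:
  assumes "non_null_eq_c" "A \<subseteq> {0..1}" "A \<subseteq> {x. cless x a}"
  shows "A \<in> null_sets lebesgue"
proof -
  have "A \<subseteq> underS cidx a" using assms(3) cless_underS by simp
  hence "|A| \<le>o |underS cidx a|" by (rule card_of_mono1)
  hence "|A| <o |UNIV :: real set|" using underS_small ordLeq_ordLess_trans by blast
  moreover have "\<forall>A. A \<subseteq> {0..1::real} \<and> ( |A|, |UNIV :: real set| ) \<in> ordLess \<longrightarrow> A \<in> null_sets lebesgue"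
    using assms(1) unfolding non_null_eq_c_def .
  ultimately show ?thesis using assms(2) by blast
qed

lemma cidx_trans: "trans cidx" and cidx_antisym: "antisym cidx" and cidx_total: "Total cidx"
  using cidx_props(3)
  unfolding well_order_on_def linear_order_on_def partial_order_on_def preorder_on_def by simp_all

lemma cless_trans: "cless x a \<Longrightarrow> (a, b) \<in> cidx \<Longrightarrow> cless x b"
proof -
  assume 1: "cless x a" and 2: "(a,b) \<in> cidx"
  have xa: "(x,a) \<in> cidx" and xna: "x \<noteq> a" using 1 unfolding cless_def by simp_all
  have "(x,b) \<in> cidx" using cidx_trans xa 2 by (rule transD)
  moreover have "x \<noteq> b"
  proof
    assume "x = b"
    hence "(a,x) \<in> cidx" using 2 by simp
    hence "a = x" using cidx_antisym xa unfolding antisym_def by blast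
    thus False using xna by simp
  qed
  ultimately show ?thesis unfolding cless_def by simp
qed

lemma cless_trans2: "cless x a \<Longrightarrow> cless a b \<Longrightarrow> cless x b"
  using cless_trans unfolding cless_def by metis

lemma cless_ex: "\<exists>a. cless a0 a"
proof -
  have inf: "\<not> finite (Field cidx)" using cidx_props(2) infinite_UNIV_char_0 by simp
  have "\<exists>b \<in> Field cidx. a0 \<noteq> b \<and> (a0,b) \<in> cidx"
    by (rule infinite_Card_order_limit[OF cidx_props(1) inf]) (simp add: cidx_props(2))
  then obtain b where "a0 \<noteq> b \<and> (a0,b) \<in> cidx" by blast
  hence "cless a0 b" unfolding cless_def by simp
  thus ?thesis ..
qed

lemma cless_total: "a = b \<or> cless a b \<or> cless b a"
proof -
  have "\<forall>x\<in>UNIV. \<forall>y\<in>UNIV. x \<noteq> y \<longrightarrow> (x,y) \<in> cidx \<or> (y,x) \<in> cidx"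
    using cidx_total cidx_props(2) unfolding total_on_def by simp
  hence "a \<noteq> b \<longrightarrow> (a,b) \<in> cidx \<or> (b,a) \<in> cidx" by simp
  thus ?thesis unfolding cless_def by blast
qed


lemma cless_ex2: "\<exists>a. cless a0 a \<and> cless a1 a"
proof -
  have "\<exists>m. (a0 = m \<or> cless a0 m) \<and> (a1 = m \<or> cless a1 m)"
  proof (cases "a0 = a1")
    case True then show ?thesis by blast
  next
    case False
    then have "cless a0 a1 \<or> cless a1 a0" using cless_total by blast
    then show ?thesis by blast
  qed
  then obtain m where m: "(a0 = m \<or> cless a0 m) \<and> (a1 = m \<or> cless a1 m)" by blast
  obtain a where a: "cless m a" using cless_ex by blast
  have "cless a0 a" using m a cless_trans2 by metis
  moreover have "cless a1 a" using m a cless_trans2 by metis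
  ultimately show ?thesis by blast
qed

lemma ev_kconv: "(\<And>a. cless a1 a \<Longrightarrow> s a = c) \<Longrightarrow> kconv s c"
  unfolding kconv_def by metis

lemma const_not_kconv:
  fixes c l :: "'b::t1_space"
  assumes "c \<noteq> l" shows "\<not> kconv (\<lambda>a. c) l"
proof
  assume k: "kconv (\<lambda>a. c) l"
  have "open (- {c})" by (simp add: open_Compl)
  moreover have "l \<in> - {c}" using assms by simp
  ultimately obtain a0 where "\<forall>a. cless a0 a \<longrightarrow> c \<in> - {c}" using k unfolding kconv_def by blast
  moreover obtain a where "cless a0 a" using cless_ex by blast
  ultimately show False by simp
qed

lemma ev_cluster:
  fixes c :: "'b::t1_space"
  assumes ev: "\<And>a. cless a1 a \<Longrightarrow> s a = c"
  shows "{y. kcluster s y} = {c}"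
proof -
  have "kcluster s c" unfolding kcluster_def
  proof (intro allI impI)
    fix U a0 assume "open U \<and> c \<in> U"
    obtain a where "cless a0 a \<and> cless a1 a" using cless_ex2 by blast
    thus "\<exists>a. cless a0 a \<and> s a \<in> U" using ev \<open>open U \<and> c \<in> U\<close> by metis
  qed
  moreover have "\<not> kcluster s y" if "y \<noteq> c" for y
  proof
    assume k: "kcluster s y"
    have "open (- {c})" by (simp add: open_Compl)
    moreover have "y \<in> - {c}" using that by simp
    ultimately obtain a where "cless a1 a \<and> s a \<in> - {c}" using k unfolding kcluster_def by blast
    thus False using ev by blast
  qed
  ultimately show ?thesis by blast
qed

lemma ev_kliminf: "(\<And>a. cless a1 a \<Longrightarrow> s a = c) \<Longrightarrow> kliminf s = c"
  unfolding kliminf_def using ev_cluster[of a1 s c] by simp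

lemma I01_space: "space I01 = {0..1}" by simp

lemma I01_sets: "N \<in> null_sets lebesgue \<Longrightarrow> N \<subseteq> {0..1} \<Longrightarrow> N \<in> sets I01"
  unfolding sets_restrict_space by (auto intro!: image_eqI[of _ _ N])

lemma I01_emeasure: "emeasure I01 (space I01) = 1"
  by (simp add: emeasure_restrict_space)

lemma I01_measure: "measure I01 (space I01) = 1"
  by (simp add: measure_restrict_space)

lemma I01_finite: "finite_measure I01"
  by (rule finite_measureI) (simp only: I01_emeasure, simp)

lemma AE_I01: "N \<in> null_sets lebesgue \<Longrightarrow> AE x in I01. x \<notin> N"
  by (subst AE_restrict_space_iff) (auto intro: AE_mp[OF AE_not_in])


definition Aset :: "real \<Rightarrow> real set" where "Aset a = {x. 0 < x \<and> x \<le> 1 \<and> cless x a}"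
definition hh :: "real \<Rightarrow> (real \<Rightarrow> real) \<Rightarrow> real \<Rightarrow> real \<Rightarrow> real" where
  "hh C \<psi> = (\<lambda>a x. C * indicator (Aset a) x + \<psi> a * indicator {0} x)"

lemma Aset_null: "non_null_eq_c \<Longrightarrow> Aset a \<in> null_sets lebesgue"
  by (rule small_null[of _ a]) (auto simp: Aset_def)

lemma zero_null: "{0::real} \<in> null_sets lebesgue"
  by simp

lemma hh_meas: "non_null_eq_c \<Longrightarrow> hh C \<psi> a \<in> borel_measurable I01"
proof -
  assume nn: "non_null_eq_c"
  have 1: "Aset a \<in> sets I01" by (rule I01_sets[OF Aset_null[OF nn]]) (auto simp: Aset_def)
  have 2: "{0} \<in> sets I01" by (rule I01_sets[OF zero_null]) auto
  show ?thesis unfolding hh_def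
    by (intro borel_measurable_add borel_measurable_times borel_measurable_const
        borel_measurable_indicator 1 2)
qed

lemma AE_pos: "AE x in I01. 0 < x \<and> x \<le> 1"
proof -
  have "AE x in I01. x \<notin> {0}" by (rule AE_I01[OF zero_null])
  moreover have "AE x in I01. x \<in> space I01" by (rule AE_space)
  ultimately show ?thesis by eventually_elim auto
qed

lemma hh_pos_val: "0 < x \<Longrightarrow> x \<le> 1 \<Longrightarrow> hh C \<psi> a x = (if cless x a then C else 0)"
  unfolding hh_def Aset_def by (auto simp: indicator_def)

lemma hh_ae0: "non_null_eq_c \<Longrightarrow> AE x in I01. hh C \<psi> a x = 0"
proof -
  assume nn: "non_null_eq_c"
  have "AE x in I01. x \<notin> Aset a" by (rule AE_I01[OF Aset_null[OF nn]])
  moreover have "AE x in I01. x \<notin> {0}" by (rule AE_I01[OF zero_null])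
  ultimately show ?thesis by eventually_elim (simp add: hh_def)
qed

lemma hh_KSeq: "hh C \<psi> \<in> KSeq"
  unfolding KSeq_def hh_def Aset_def by (auto simp: indicator_def)

lemma hh_conv: "AE x in I01. kconv (\<lambda>a. hh C \<psi> a x) C"
  using AE_pos
proof eventually_elim
  case (elim x)
  show ?case by (rule ev_kconv[of x]) (simp add: hh_pos_val elim)
qed

lemma nn_int_hh: "non_null_eq_c \<Longrightarrow> (\<integral>\<^sup>+ x. ennreal (hh C \<psi> a x) \<partial>I01) = 0"
proof -
  assume nn: "non_null_eq_c"
  have "(\<integral>\<^sup>+ x. ennreal (hh C \<psi> a x) \<partial>I01) = (\<integral>\<^sup>+ x. 0 \<partial>I01)"
    by (rule nn_integral_cong_AE) (use hh_ae0[OF nn, of C \<psi> a] in eventually_elim, simp)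
  thus ?thesis by simp
qed

lemma I01_int_const: "integrable I01 (\<lambda>x. c::real)"
  using finite_measure.integrable_const[OF I01_finite] .

lemma hh_NM: "non_null_eq_c \<Longrightarrow> C > 0 \<Longrightarrow> hh C \<psi> \<in> NM"
proof -
  assume nn: "non_null_eq_c" and C: "C > 0"
  have mono: "AE x in I01. 0 \<le> hh C \<psi> a x \<and> hh C \<psi> a x \<le> hh C \<psi> b x" if "(a,b) \<in> cidx" for a b
    using AE_pos
  proof eventually_elim
    case (elim x)
    show ?case using C cless_trans[OF _ that, of x] by (simp add: hh_pos_val elim)
  qed
  have ic: "(\<integral>\<^sup>+ x. ennreal C \<partial>I01) = ennreal C" by (simp only: nn_integral_const I01_emeasure) simp
  have eq: "(\<lambda>a. \<integral>\<^sup>+ x. ennreal (hh C \<psi> a x) \<partial>I01) = (\<lambda>a. 0)"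
    by (rule ext) (rule nn_int_hh[OF nn])
  have "\<not> kconv (\<lambda>a. (0::ennreal)) (ennreal C)" by (rule const_not_kconv) (use C in simp)
  hence nk: "\<not> kconv (\<lambda>a. \<integral>\<^sup>+ x. ennreal (hh C \<psi> a x) \<partial>I01) (\<integral>\<^sup>+ x. ennreal C \<partial>I01)"
    unfolding eq ic .
  have P: "(\<forall>a. hh C \<psi> a \<in> borel_measurable I01) \<and>
     (\<forall>a b. (a, b) \<in> cidx \<longrightarrow> (AE x in I01. 0 \<le> hh C \<psi> a x \<and> hh C \<psi> a x \<le> hh C \<psi> b x)) \<and>
     (\<exists>F. integrable I01 F \<and> (AE x in I01. kconv (\<lambda>a. hh C \<psi> a x) (F x)) \<and>
          \<not> kconv (\<lambda>a. \<integral>\<^sup>+ x. ennreal (hh C \<psi> a x) \<partial>I01) (\<integral>\<^sup>+ x. ennreal (F x) \<partial>I01))"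
  proof (intro conjI allI impI exI[of _ "\<lambda>x. C"])
    fix a show "hh C \<psi> a \<in> borel_measurable I01" by (rule hh_meas[OF nn])
  next
    fix a b :: real assume "(a,b) \<in> cidx" thus "AE x in I01. 0 \<le> hh C \<psi> a x \<and> hh C \<psi> a x \<le> hh C \<psi> b x" by (rule mono)
  qed (rule I01_int_const, rule hh_conv, rule nk)
  show ?thesis unfolding NM_def using hh_KSeq P by (rule CollectI[of _ "hh C \<psi>", OF conjI])
qed


lemma hh_absdiff_int: "non_null_eq_c \<Longrightarrow> (\<integral>x. \<bar>hh C \<psi> a x - C\<bar> \<partial>I01) = \<bar>C\<bar>"
proof -
  assume nn: "non_null_eq_c"
  have m: "(\<lambda>x. \<bar>hh C \<psi> a x - C\<bar>) \<in> borel_measurable I01"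
    by (intro borel_measurable_abs borel_measurable_diff hh_meas[OF nn] borel_measurable_const)
  have "(\<integral>x. \<bar>hh C \<psi> a x - C\<bar> \<partial>I01) = (\<integral>x. \<bar>C\<bar> \<partial>I01)"
    by (rule integral_cong_AE[OF m borel_measurable_const]) (use hh_ae0[OF nn, of C \<psi> a] in eventually_elim, simp)
  also have "\<dots> = \<bar>C\<bar>" by (simp only: lebesgue_integral_const I01_measure) simp
  finally show ?thesis .
qed

lemma hh_ND: "non_null_eq_c \<Longrightarrow> C > 0 \<Longrightarrow> hh C \<psi> \<in> ND"
proof -
  assume nn: "non_null_eq_c" and C: "C > 0"
  have eq: "(\<lambda>a. \<integral>x. \<bar>hh C \<psi> a x - C\<bar> \<partial>I01) = (\<lambda>a. C)"
    by (rule ext) (simp only: hh_absdiff_int[OF nn], use C in simp)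
  have "\<not> kconv (\<lambda>a. C) (0::real)" by (rule const_not_kconv) (use C in simp)
  hence nk: "\<not> kconv (\<lambda>a. \<integral>x. \<bar>hh C \<psi> a x - C\<bar> \<partial>I01) 0"
    unfolding eq .
  have dom: "AE x in I01. \<bar>hh C \<psi> a x\<bar> \<le> C" for a
    using hh_ae0[OF nn, of C \<psi> a] by eventually_elim (use C in simp)
  have P: "(\<forall>a. hh C \<psi> a \<in> borel_measurable I01) \<and>
     (\<exists>g. integrable I01 g \<and> (\<forall>a. AE x in I01. \<bar>hh C \<psi> a x\<bar> \<le> g x)) \<and>
     (\<exists>F. integrable I01 F \<and> (AE x in I01. kconv (\<lambda>a. hh C \<psi> a x) (F x)) \<and>
          \<not> kconv (\<lambda>a. \<integral>x. \<bar>hh C \<psi> a x - F x\<bar> \<partial>I01) 0)"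
  proof (intro conjI allI exI[of _ "\<lambda>x. C"])
    fix a show "hh C \<psi> a \<in> borel_measurable I01" by (rule hh_meas[OF nn])
  next
    fix a show "AE x in I01. \<bar>hh C \<psi> a x\<bar> \<le> C" by (rule dom)
  qed (rule I01_int_const, rule I01_int_const, rule hh_conv, rule nk)
  show ?thesis unfolding ND_def using hh_KSeq P by (rule CollectI[of _ "hh C \<psi>", OF conjI])
qed

lemma hh_NF: "non_null_eq_c \<Longrightarrow> C > 0 \<Longrightarrow> hh C \<psi> \<in> NF"
proof -
  assume nn: "non_null_eq_c" and C: "C > 0"
  define L where "L = (\<lambda>x. kliminf (\<lambda>a. ereal (hh C \<psi> a x)))"
  have Lpos: "L x = ereal C" if "0 < x" "x \<le> 1" for x
    unfolding L_def by (rule ev_kliminf[of x]) (simp add: hh_pos_val that)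
  have AEL: "AE x in I01. L x = ereal C"
    using AE_pos by eventually_elim (simp add: Lpos)
  define r where "r = real_of_ereal (L 0)"
  have m0: "(\<lambda>x. C + (r - C) * indicator {0} x) \<in> borel_measurable I01"
  proof -
    have 2: "{0} \<in> sets I01" by (rule I01_sets[OF zero_null]) auto
    show ?thesis by (intro borel_measurable_add borel_measurable_times borel_measurable_const
        borel_measurable_indicator 2)
  qed
  have meq: "x \<in> space I01 \<Longrightarrow> real_of_ereal (L x) = C + (r - C) * indicator {0} x" for x
    by (cases "x = 0") (auto simp: r_def Lpos)
  have mL: "(\<lambda>x. real_of_ereal (L x)) \<in> borel_measurable I01"
    using m0 measurable_cong[of I01 "\<lambda>x. real_of_ereal (L x)" "\<lambda>x. C + (r - C) * indicator {0} x"] meq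
    by blast
  have AEL': "AE x in I01. C = real_of_ereal (L x)"
    using AEL by eventually_elim simp
  have intL: "integrable I01 (\<lambda>x. real_of_ereal (L x))"
    by (rule integrable_cong_AE_imp[OF I01_int_const mL AEL'])
  have "(\<integral>x. real_of_ereal (L x) \<partial>I01) = (\<integral>x. C \<partial>I01)"
    by (rule integral_cong_AE[OF mL borel_measurable_const]) (use AEL' in eventually_elim, simp)
  also have "\<dots> = C" by (simp only: lebesgue_integral_const I01_measure) simp
  finally have iL: "(\<integral>x. real_of_ereal (L x) \<partial>I01) = C" .
  have eq: "(\<lambda>a. enn2ereal (\<integral>\<^sup>+ x. ennreal (hh C \<psi> a x) \<partial>I01)) = (\<lambda>a. 0)"
    by (rule ext) (simp add: nn_int_hh[OF nn] zero_ennreal.rep_eq)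
  have k0: "kliminf (\<lambda>a. enn2ereal (\<integral>\<^sup>+ x. ennreal (hh C \<psi> a x) \<partial>I01)) = 0"
    unfolding eq by (rule ev_kliminf[of 0]) simp
  have ineq: "ereal (\<integral>x. real_of_ereal (L x) \<partial>I01) > kliminf (\<lambda>a. enn2ereal (\<integral>\<^sup>+ x. ennreal (hh C \<psi> a x) \<partial>I01))"
    unfolding k0 iL using C by simp
  have AEfin: "AE x in I01. \<bar>L x\<bar> \<noteq> \<infinity>"
    using AEL by eventually_elim simp
  have ae0: "AE x in I01. 0 \<le> hh C \<psi> a x" for a
    using hh_ae0[OF nn, of C \<psi> a] by eventually_elim simp
  have P1: "\<forall>a. hh C \<psi> a \<in> borel_measurable I01 \<and> (AE x in I01. 0 \<le> hh C \<psi> a x)"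
    using hh_meas[OF nn] ae0 by blast
  have P2: "let L = (\<lambda>x. kliminf (\<lambda>a. ereal (hh C \<psi> a x))) in
        (AE x in I01. \<bar>L x\<bar> \<noteq> \<infinity>) \<and>
        integrable I01 (\<lambda>x. real_of_ereal (L x)) \<and>
        ereal (\<integral>x. real_of_ereal (L x) \<partial>I01) >
          kliminf (\<lambda>a. enn2ereal (\<integral>\<^sup>+ x. ennreal (hh C \<psi> a x) \<partial>I01))"
    unfolding Let_def L_def[symmetric] using AEfin intL ineq by blast
  show ?thesis unfolding NF_def using hh_KSeq P1 P2 by (rule CollectI[of _ "hh C \<psi>", OF conjI, OF _ conjI])
qed


lemma fsum_apply: "(\<Sum>g\<in>G. f g) a = (\<Sum>g\<in>G. f g a)"
  by (induction G rule: infinite_finite_induct) auto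

lemma surj_pair: "\<exists>p :: real \<Rightarrow> real \<times> real. surj p"
proof -
  have "|(UNIV::real set) \<times> (UNIV::real set)| =o |UNIV::real set|"
    by (rule card_of_Times_same_infinite) (simp add: infinite_UNIV_char_0)
  hence "|(UNIV::real set) \<times> (UNIV::real set)| \<le>o |UNIV::real set|" using ordIso_iff_ordLeq by blast
  hence "|UNIV::(real \<times> real) set| \<le>o |UNIV::real set|" by (simp only: UNIV_Times_UNIV)
  hence "\<exists>g. g ` (UNIV::real set) = (UNIV :: (real \<times> real) set)"
    using card_of_ordLeq2[of "UNIV::(real\<times>real) set" "UNIV::real set"] by simp
  thus ?thesis by blast
qed

fun dec :: "(real \<Rightarrow> real \<times> real) \<Rightarrow> nat \<Rightarrow> real \<Rightarrow> real list" where
  "dec p 0 r = []"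
| "dec p (Suc n) r = fst (p r) # dec p n (snd (p r))"

lemma dec_surj: "surj p \<Longrightarrow> \<exists>r. dec p (length xs) r = xs"
proof (induction xs)
  case Nil show ?case by simp
next
  case (Cons y ys)
  then obtain r where r: "dec p (length ys) r = ys" by blast
  obtain s where "p s = (y, r)" using Cons.prems by (metis surjD)
  hence "dec p (length (y # ys)) s = y # ys" using r by simp
  thus ?case ..
qed

lemma surj_list: "\<exists>e :: real \<Rightarrow> real list. surj e"
proof -
  obtain p :: "real \<Rightarrow> real \<times> real" where p: "surj p" using surj_pair by blast
  define e where "e r = dec p (nat \<lfloor>fst (p r)\<rfloor>) (snd (p r))" for r
  have "\<exists>s. xs = e s" for xs
  proof -
    obtain r where r: "dec p (length xs) r = xs" using dec_surj[OF p] by blast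
    obtain s where s: "p s = (real (length xs), r)" using p by (metis surjD)
    have "e s = xs" unfolding e_def s using r by simp
    thus ?thesis by metis
  qed
  hence "surj e" unfolding surj_def by blast
  thus ?thesis by blast
qed

definition phi :: "(real \<Rightarrow> real list) \<Rightarrow> real set \<Rightarrow> real \<Rightarrow> real" where
  "phi e T a = (if set (e a) \<subseteq> T then 1 else 0)"

lemma phi_indep:
  assumes e: "surj e" and S: "finite S" and z: "\<And>a. (\<Sum>T\<in>S. w T * phi e T a) = 0"
    and T0: "T0 \<in> S" "w T0 \<noteq> 0"
  shows False
proof -
  define S' where "S' = {T\<in>S. w T \<noteq> 0}"
  have fS': "finite S'" using S unfolding S'_def by simp
  have neS': "S' \<noteq> {}" using T0 unfolding S'_def by blast
  obtain M where M: "M \<in> S'" and Mmax: "\<And>T. T \<in> S' \<Longrightarrow> M \<subseteq> T \<Longrightarrow> M = T"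
    using finite_has_maximal[OF fS' neS'] by blast
  define y where "y T = (SOME y. y \<in> M \<and> y \<notin> T)" for T
  have y: "y T \<in> M \<and> y T \<notin> T" if "T \<in> S' - {M}" for T
  proof -
    have "\<not> M \<subseteq> T" using Mmax that by blast
    hence "\<exists>y. y \<in> M \<and> y \<notin> T" by blast
    thus ?thesis unfolding y_def by (rule someI_ex)
  qed
  define F where "F = y ` (S' - {M})"
  have "finite F" unfolding F_def using fS' by simp
  then obtain xs where xs: "set xs = F" using finite_list by blast
  obtain a where a: "e a = xs" using e by (metis surjD)
  have pM: "phi e M a = 1" unfolding phi_def a xs F_def using y by auto
  have pT: "phi e T a = 0" if "T \<in> S' - {M}" for T
  proof -
    have "y T \<in> set (e a)" unfolding a xs F_def using that by simp
    thus ?thesis unfolding phi_def using y[OF that] by auto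
  qed
  have "(\<Sum>T\<in>S. w T * phi e T a) = (\<Sum>T\<in>S'. w T * phi e T a)"
    by (rule sum.mono_neutral_right[OF S]) (auto simp: S'_def)
  also have "\<dots> = w M * phi e M a + (\<Sum>T\<in>S' - {M}. w T * phi e T a)"
    by (rule sum.remove[OF fS' M])
  also have "\<dots> = w M" using pM pT by simp
  finally show False using z[of a] M unfolding S'_def by simp
qed


definition gfam :: "(real \<Rightarrow> real list) \<Rightarrow> real set \<Rightarrow> real \<Rightarrow> real \<Rightarrow> real" where
  "gfam e T = hh 1 (phi e T)"

lemma gfam_0: "gfam e T a 0 = phi e T a"
  unfolding gfam_def hh_def Aset_def by simp

lemma gfam_form: "gfam e T a x = indicator (Aset a) x + gfam e T a 0 * indicator {0} x"
  unfolding gfam_0 unfolding gfam_def hh_def by simp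

lemma gfam_inj: "surj e \<Longrightarrow> inj (gfam e)"
proof (rule injI)
  fix T T' assume e: "surj e" and eq: "gfam e T = gfam e T'"
  show "T = T'"
  proof (rule set_eqI)
    fix y
    obtain a where a: "e a = [y]" using e by (metis surjD)
    have "phi e T a = phi e T' a" using eq gfam_0 by metis
    thus "y \<in> T \<longleftrightarrow> y \<in> T'" unfolding phi_def a by (auto split: if_splits)
  qed
qed

lemma module_kscale: "module kscale"
  by unfold_locales (auto simp: kscale_def fun_eq_iff algebra_simps)

lemma gfam_sum:
  assumes "G \<subseteq> range (gfam e)"
  shows "(\<Sum>g\<in>G. kscale (c g) g) = hh (\<Sum>g\<in>G. c g) (\<lambda>a. \<Sum>g\<in>G. c g * g a 0)"
proof (rule ext, rule ext)
  fix a x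
  have f: "g a x = indicator (Aset a) x + g a 0 * indicator {0} x" if "g \<in> G" for g
    using assms that gfam_form by blast
  have "(\<Sum>g\<in>G. kscale (c g) g) a x = (\<Sum>g\<in>G. c g * g a x)"
    by (simp add: fsum_apply kscale_def)
  also have "\<dots> = (\<Sum>g\<in>G. c g * indicator (Aset a) x + (c g * g a 0) * indicator {0} x)"
    by (rule sum.cong) (simp_all add: f algebra_simps)
  also have "\<dots> = (\<Sum>g\<in>G. c g) * indicator (Aset a) x + (\<Sum>g\<in>G. c g * g a 0) * indicator {0} x"
    by (simp add: sum.distrib sum_distrib_right)
  finally show "(\<Sum>g\<in>G. kscale (c g) g) a x = hh (\<Sum>g\<in>G. c g) (\<lambda>a. \<Sum>g\<in>G. c g * g a 0) a x"
    unfolding hh_def by simp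
qed

lemma gfam_indep:
  assumes e: "surj e"
  shows "\<not> module.dependent kscale (range (gfam e))"
proof
  assume "module.dependent kscale (range (gfam e))"
  then obtain t u where t: "finite t" "t \<subseteq> range (gfam e)" "(\<Sum>v\<in>t. kscale (u v) v) = 0"
    and v: "\<exists>v\<in>t. u v \<noteq> 0"
    unfolding module.dependent_explicit[OF module_kscale] by blast
  define S where "S = {T. gfam e T \<in> t}"
  have inj: "inj (gfam e)" by (rule gfam_inj[OF e])
  have tS: "t = gfam e ` S" using t(2) unfolding S_def by blast
  have fS: "finite S" using t(1) inj unfolding tS by (meson finite_imageD inj_on_subset subset_UNIV)
  have z: "(\<Sum>T\<in>S. u (gfam e T) * phi e T a) = 0" for a
  proof -
    have "(\<Sum>v\<in>t. kscale (u v) v) a 0 = 0" using t(3) by simp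
    hence "(\<Sum>v\<in>t. u v * v a 0) = 0" by (simp add: fsum_apply kscale_def)
    hence "(\<Sum>T\<in>S. u (gfam e T) * gfam e T a 0) = 0"
      unfolding tS using sum.reindex[of "gfam e" S "\<lambda>v. u v * v a 0"] inj
      by (simp add: inj_on_subset)
    thus ?thesis by (simp add: gfam_0)
  qed
  obtain v where "v \<in> t" "u v \<noteq> 0" using v by blast
  then obtain T0 where "T0 \<in> S" "u (gfam e T0) \<noteq> 0" unfolding tS by blast
  thus False using phi_indep[OF e fS z] by blast
qed

lemma pos_sum_hh:
  assumes "finite G" "G \<noteq> {}" "G \<subseteq> range (gfam e)" "\<forall>g\<in>G. c g > (0::real)"
  shows "\<exists>C \<psi>. C > 0 \<and> (\<Sum>g\<in>G. kscale (c g) g) = hh C \<psi>"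
proof -
  have "(\<Sum>g\<in>G. c g) > 0" using assms by (intro sum_pos) auto
  thus ?thesis using gfam_sum[OF assms(3)] by blast
qed

lemma coneable_generic:
  assumes nn: "non_null_eq_c" and memb: "\<And>C \<psi>. C > 0 \<Longrightarrow> hh C \<psi> \<in> S"
  shows "pos_coneable S (Pow (UNIV :: real set))"
proof -
  obtain e :: "real \<Rightarrow> real list" where e: "surj e" using surj_list by blast
  define B where "B = range (gfam e)"
  have "B \<subseteq> S" unfolding B_def gfam_def using memb by auto
  moreover have "\<not> module.dependent kscale B" unfolding B_def by (rule gfam_indep[OF e])
  moreover have "( |B|, |Pow (UNIV :: real set)| ) \<in> ordIso"
  proof -
    have "bij_betw (gfam e) (Pow UNIV) B" unfolding B_def using gfam_inj[OF e]
      by (simp add: bij_betw_def)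
    hence "|Pow (UNIV::real set)| =o |B|" by (rule card_of_ordIsoI)
    thus ?thesis by (rule ordIso_symmetric)
  qed
  moreover have "(\<Sum>g\<in>G. kscale (c g) g) \<in> S"
    if H: "finite G \<and> G \<noteq> {} \<and> G \<subseteq> B \<and> (\<forall>g\<in>G. c g > (0::real))" for G c
  proof -
    obtain C \<psi> where "C > 0" "(\<Sum>g\<in>G. kscale (c g) g) = hh C \<psi>"
      using pos_sum_hh[of G e c] H unfolding B_def by blast
    thus ?thesis using memb by simp
  qed
  ultimately show ?thesis unfolding pos_coneable_def by blast
qed

theorem mainTheorem7:
  assumes "non_null_eq_c"
  shows "pos_coneable NM (Pow (UNIV :: real set)) \<and>
         pos_coneable NF (Pow (UNIV :: real set)) \<and>
         pos_coneable ND (Pow (UNIV :: real set))"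
  using coneable_generic[OF assms hh_NM[OF assms]] coneable_generic[OF assms hh_NF[OF assms]]
    coneable_generic[OF assms hh_ND[OF assms]] by blast

end
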